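(* For every integer $n$, \[ \sum_{k = (1 + ( - 1)^n )/2}^n ( - 1)^{k - 1} L_k^{\,4} = ( - 1)^{n - 1} \frac{5}{3}F_n F_{n + 1} \left(L_{n - 2} L_{n + 3} + ( - 1)^n 2\right)\,. \] (Here the summation starts at $k=1$ if $n$ is even and at $k=0$ if $n$ is odd.)
   Context: $F_i$ and $L_i$ denote the Fibonacci and Lucas numbers, defined for all $i\in\mathbb{Z}$ by $F_i=F_{i-1}+F_{i-2}$, $F_0=0$, $F_1=1$, and $L_i=L_{i-1}+L_{i-2}$, $L_0=2$, $L_1=1$; equivalently $F_{-i}=(-1)^{i-1}F_i$ and $L_{-i}=(-1)^iL_i$. Summation convention for an arbitrary integer upper limit: $\sum_{k=a}^{a-1} f(k)=0$, and for $n<a-1$, $\sum_{k=a}^{n} f(k) = -\sum_{k=n+1}^{a-1} f(k)$. *)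

theory Defs
  imports Complex_Main
begin

fun fibn :: "nat \<Rightarrow> int" where
  "fibn 0 = 0" | "fibn (Suc 0) = 1" | "fibn (Suc (Suc n)) = fibn (Suc n) + fibn n"

fun lucn :: "nat \<Rightarrow> int" where
  "lucn 0 = 2" | "lucn (Suc 0) = 1" | "lucn (Suc (Suc n)) = lucn (Suc n) + lucn n"

definition F :: "int \<Rightarrow> int" where
  "F i = (if i \<ge> 0 then fibn (nat i) else (-1) ^ (nat (-i) + 1) * fibn (nat (-i)))"

definition L :: "int \<Rightarrow> int" where
  "L i = (if i \<ge> 0 then lucn (nat i) else (-1) ^ (nat (-i)) * lucn (nat (-i)))"

definition gsum :: "int \<Rightarrow> int \<Rightarrow> (int \<Rightarrow> 'a::ab_group_add) \<Rightarrow> 'a" where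
  "gsum a n f = (if n \<ge> a - 1 then (\<Sum>k\<in>{a..n}. f k) else - (\<Sum>k\<in>{n+1..a-1}. f k))"

end

theory Submission
  imports Defs
begin

lemma F_rec: "F (i + 2) = F (i + 1) + F i"
proof -
  consider "i \<ge> 0" | "i = -1" | "i \<le> -2" by linarith
  then show ?thesis
  proof cases
    case 1
    then obtain m where m: "i = int m" by (metis nonneg_eq_int)
    have "nat (int m + 2) = Suc (Suc m)" "nat (int m + 1) = Suc m" by auto
    then show ?thesis using m by (simp add: F_def)
  next
    case 2 then show ?thesis by (simp add: F_def)
  next
    case 3
    define k where "k = nat (-i-2)"
    have i: "i = - int k - 2" using 3 k_def by simp
    have a: "nat (- i) = Suc (Suc k)" "nat (-(i+1)) = Suc k" "nat (-(i+2)) = k" using i by auto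
    show ?thesis
    proof (cases "k = 0")
      case True
      then show ?thesis using i by (simp add: F_def numeral_2_eq_2)
    next
      case False
      then show ?thesis using i a 3 by (simp add: F_def algebra_simps)
    qed
  qed
qed

lemma L_rec: "L (i + 2) = L (i + 1) + L i"
proof -
  consider "i \<ge> 0" | "i = -1" | "i \<le> -2" by linarith
  then show ?thesis
  proof cases
    case 1
    then obtain m where m: "i = int m" by (metis nonneg_eq_int)
    have "nat (int m + 2) = Suc (Suc m)" "nat (int m + 1) = Suc m" by auto
    then show ?thesis using m by (simp add: L_def)
  next
    case 2 then show ?thesis by (simp add: L_def)
  next
    case 3
    define k where "k = nat (-i-2)"
    have i: "i = - int k - 2" using 3 k_def by simp
    have a: "nat (- i) = Suc (Suc k)" "nat (-(i+1)) = Suc k" "nat (-(i+2)) = k" using i by auto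
    show ?thesis
    proof (cases "k = 0")
      case True
      then show ?thesis using i by (simp add: L_def numeral_2_eq_2)
    next
      case False
      then show ?thesis using i a 3 by (simp add: L_def algebra_simps)
    qed
  qed
qed

lemma int_both_induct:
  assumes "P 0" "\<And>i. P i \<Longrightarrow> P (i+1)" "\<And>i. P i \<Longrightarrow> P (i-1)"
  shows "P (n::int)"
  using int_induct[of P 0 n] assms by auto

lemma L_F: "L i = F (i - 1) + F (i + 1)"
proof -
  have "L i = F (i - 1) + F (i + 1) \<and> L (i+1) = F i + F (i + 2)"
  proof (induction i rule: int_both_induct)
    case 1 then show ?case by (simp add: L_def F_def numeral_2_eq_2)
  next
    case (2 i)
    have "L (i+2) = L (i+1) + L i" by (rule L_rec)
    moreover have "F (i+3) = F (i+2) + F(i+1)" using F_rec[of "i+1"] by (simp add: add.commute add.left_commute)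
    moreover have "F (i+2) = F(i+1) + F i" by (rule F_rec)
    moreover have "F (i+1) = F i + F (i - 1)" using F_rec[of "i-1"] by (simp add: add.commute)
    ultimately show ?case using 2 by (simp add: add.commute add.left_commute)
  next
    case (3 i)
    have "L (i+1) = L i + L (i - 1)" using L_rec[of "i-1"] by (simp add: add.commute)
    moreover have "F (i+1) = F i + F(i - 1)" using F_rec[of "i - 1"] by (simp add: add.commute)
    moreover have "F i = F (i - 1) + F (i - 2)" using F_rec[of "i-2"] by (simp add: add.commute)
    moreover have "F (i+2) = F(i+1) + F i" by (rule F_rec)
    ultimately show ?case using 3 by (simp add: algebra_simps)
  qed
  then show ?thesis by simp
qed

lemma cassini: "real_of_int (F (n+1))^2 - real_of_int (F (n+1)) * real_of_int (F n) - real_of_int (F n)^2 = (-1::real) powi n"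
proof (induction n rule: int_both_induct)
  case 1 then show ?case by (simp add: F_def)
next
  case (2 i)
  have r: "F (i+2) = F(i+1) + F i" by (rule F_rec)
  have "(-1::real) powi (i+1) = - ((-1) powi i)" by (simp add: power_int_add)
  then show ?case using 2 r by (simp add: algebra_simps power2_eq_square)
next
  case (3 i)
  have r: "F (i+1) = F i + F (i - 1)" using F_rec[of "i-1"] by (simp add: add.commute)
  have "(-1::real) powi (i-1) = - ((-1) powi i)" by (simp add: power_int_diff)
  then show ?case using 3 r by (simp add: algebra_simps power2_eq_square)
qed

definition RR :: "int \<Rightarrow> real" where
  "RR n = (-1::real) powi (n - 1) * (5 / 3) * real_of_int (F n) * real_of_int (F (n + 1))
        * (real_of_int (L (n - 2)) * real_of_int (L (n + 3)) + (-1::real) powi n * 2)"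

lemma key: "RR n = RR (n - 1) + 16 * (-1::real) powi n - (-1::real) powi n * real_of_int (L n)^4"
proof -
  define a where "a = real_of_int (F n)"
  define b where "b = real_of_int (F (n+1))"
  define s where "s = (-1::real) powi n"
  have s1: "(-1::real) powi (n - 1) = - s" unfolding s_def by (simp add: power_int_diff)
  have s2: "(-1::real) powi (n - 1 - 1) = s" unfolding s_def by (simp add: power_int_diff)
  have ss: "s * s = 1" unfolding s_def by (rule power_int_minus_one_mult_self)
  have cas: "b^2 - b * a - a^2 = s" unfolding a_def b_def s_def by (rule cassini)
  have f1: "F (n-1) = F (n+1) - F n" using F_rec[of "n-1"] by (simp add: add.commute)
  have f2: "F (n-2) = F n - F (n - 1)" using F_rec[of "n-2"] by (simp add: add.commute)
  have f3: "F (n-3) = F (n - 1) - F (n - 2)" using F_rec[of "n-3"] by (simp add: add.commute)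
  have f4: "F (n-4) = F (n - 2) - F (n - 3)" using F_rec[of "n-4"] by (simp add: add.commute)
  have g2: "F (n+2) = F (n+1) + F n" using F_rec[of "n"] by (simp add: add.commute)
  have g3: "F (n+3) = F (n+2) + F (n+1)" using F_rec[of "n+1"] by (simp add: add.commute add.left_commute)
  have g4: "F (n+4) = F (n+3) + F (n+2)" using F_rec[of "n+2"] by (simp add: add.commute add.left_commute)
  have Ln: "L n = F (n - 1) + F (n+1)" by (rule L_F)
  have Lm2: "L (n-2) = F (n - 3) + F (n - 1)" using L_F[of "n-2"] by simp
  have Lp3: "L (n+3) = F (n + 2) + F (n + 4)" using L_F[of "n+3"] by (simp add: add.commute add.left_commute)
  have Lm3: "L (n-1-2) = F (n - 4) + F (n - 2)" using L_F[of "n-3"] by simp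
  have Lp2: "L (n-1+3) = F (n + 1) + F (n + 3)" using L_F[of "n+2"] by (simp add: add.commute add.left_commute)
  have e1: "real_of_int (L n) = 2*b - a" using Ln f1 unfolding a_def b_def by simp
  have e2: "real_of_int (L (n-2)) = 3*b - 4*a" using Lm2 f1 f2 f3 unfolding a_def b_def by simp
  have e3: "real_of_int (L (n+3)) = 3*a + 4*b" using Lp3 g2 g3 g4 unfolding a_def b_def by simp
  have e4: "real_of_int (L (n-1-2)) = 7*a - 4*b" using Lm3 f1 f2 f3 f4 unfolding a_def b_def by simp
  have e5: "real_of_int (L (n-1+3)) = a + 3*b" using Lp2 g2 g3 unfolding a_def b_def by simp
  have e6: "real_of_int (F (n-1)) = b - a" using f1 unfolding a_def b_def by simp
  have r1: "RR n = (-1::real) powi (n - 1) * (5 / 3) * a * b * (real_of_int (L (n - 2)) * real_of_int (L (n + 3)) + s * 2)"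
    unfolding RR_def a_def b_def s_def by (rule refl)
  have k1: "RR n = - s * (5/3) * a * b * ((3*b - 4*a) * (3*a + 4*b) + s * 2)"
    unfolding r1 s1 e2 e3 by (rule refl)
  have r2: "RR (n - 1) = (-1::real) powi (n - 1 - 1) * (5 / 3) * real_of_int (F (n - 1)) * a * (real_of_int (L (n - 1 - 2)) * real_of_int (L (n - 1 + 3)) + (-1::real) powi (n - 1) * 2)"
    unfolding RR_def a_def by simp
  have k2: "RR (n - 1) = s * (5/3) * (b - a) * a * ((7*a - 4*b) * (a + 3*b) - s * 2)"
    unfolding r2 s1 s2 e4 e5 e6 by simp
  define Q where "Q = b^2 - b * a - a^2"
  have h0: "- Q * (5/3) * a * b * ((3*b - 4*a) * (3*a + 4*b)) - Q * Q * (10/3) * a * b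
     - (Q * (5/3) * (b - a) * a * ((7*a - 4*b) * (a + 3*b)) - Q * Q * (10/3) * (b - a) * a)
     - 16 * Q * Q * Q + Q * (2*b-a)^4 = 0"
    unfolding Q_def by algebra
  have sQ: "s = Q" using cas Q_def by simp
  have h: "- s * (5/3) * a * b * ((3*b - 4*a) * (3*a + 4*b)) - s * s * (10/3) * a * b
     - (s * (5/3) * (b - a) * a * ((7*a - 4*b) * (a + 3*b)) - s * s * (10/3) * (b - a) * a)
     - 16 * s * s * s + s * (2*b-a)^4 = 0"
    using h0 sQ by simp
  have sss: "16 * s * s * s = 16 * s" using ss by (metis mult.assoc mult.right_neutral)
  have k3: "- s * (5/3) * a * b * ((3*b - 4*a) * (3*a + 4*b) + s * 2)
     = s * (5/3) * (b - a) * a * ((7*a - 4*b) * (a + 3*b) - s * 2) + 16 * s - s * (2*b-a)^4"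
    using h unfolding sss by algebra
  show ?thesis unfolding k1 k2 e1 s_def[symmetric] k3 by simp
qed

lemma gsum_step: "gsum a n f = gsum a (n - 1) f + f n"
proof -
  consider "n \<ge> a" | "n = a - 1" | "n < a - 1" by linarith
  then show ?thesis
  proof cases
    case 1
    have e: "{a..n} = insert n {a..n-1}" using 1 by auto
    show ?thesis using 1 unfolding gsum_def e by (simp add: add.commute)
  next
    case 2
    have e: "{n..a-1} = {n}" using 2 by auto
    show ?thesis using 2 unfolding gsum_def by (simp add: e)
  next
    case 3
    have e: "{n..a-1} = insert n {n+1..a-1}" using 3 by auto
    show ?thesis using 3 unfolding gsum_def by (simp add: e)
  qed
qed

lemma gsum_shift: "gsum (a - 1) n f = f (a - 1) + gsum a n f"
proof (induction n rule: int_induct[where k = "a - 1"])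
  case base
  then show ?case by (simp add: gsum_def)
next
  case (step1 i)
  show ?case using step1(2) gsum_step[of "a-1" "i+1" f] gsum_step[of a "i+1" f] by simp
next
  case (step2 i)
  show ?case using step2(2) gsum_step[of "a-1" i f] gsum_step[of a i f] by simp
qed

lemma sgn_powi: "(-1::real) powi n = (if even n then 1 else -1)"
proof (induction n rule: int_both_induct)
  case 1 then show ?case by simp
next
  case (2 i) then show ?case by (simp add: power_int_add)
next
  case (3 i) then show ?case by (simp add: power_int_diff)
qed

lemma mainG: "gsum 1 n (\<lambda>k. (-1::real) powi (k - 1) * real_of_int (L k) ^ 4)
   = RR n + 8 * (1 - (-1::real) powi n)"
proof (induction n rule: int_both_induct)
  case 1 then show ?case by (simp add: gsum_def RR_def F_def)
next
  case (2 i)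
  have k: "RR (i+1) = RR i + 16 * (-1::real) powi (i+1) - (-1::real) powi (i+1) * real_of_int (L (i+1))^4"
    using key[of "i+1"] by simp
  have p: "(-1::real) powi (i+1) = - ((-1) powi i)" by (simp add: power_int_add)
  show ?case using 2 k p gsum_step[of 1 "i+1" "\<lambda>k. (-1::real) powi (k - 1) * real_of_int (L k) ^ 4"]
    by (simp add: algebra_simps)
next
  case (3 i)
  have k: "RR i = RR (i - 1) + 16 * (-1::real) powi i - (-1::real) powi i * real_of_int (L i)^4"
    using key[of "i"] by simp
  have p: "(-1::real) powi (i - 1) = - ((-1) powi i)" by (simp add: power_int_diff)
  show ?case using 3 k p gsum_step[of 1 i "\<lambda>k. (-1::real) powi (k - 1) * real_of_int (L k) ^ 4"]
    by (simp add: algebra_simps)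
qed

theorem corollary4:
  fixes n :: int
  shows "gsum ((1 + (-1) ^ nat \<bar>n\<bar>) div 2) n
           (\<lambda>k. (-1::real) powi (k - 1) * real_of_int (L k) ^ 4)
    = (-1::real) powi (n - 1) * (5 / 3) * real_of_int (F n) * real_of_int (F (n + 1))
        * (real_of_int (L (n - 2)) * real_of_int (L (n + 3)) + (-1::real) powi n * 2)"
proof -
  have R: "(-1::real) powi (n - 1) * (5 / 3) * real_of_int (F n) * real_of_int (F (n + 1))
        * (real_of_int (L (n - 2)) * real_of_int (L (n + 3)) + (-1::real) powi n * 2) = RR n"
    unfolding RR_def by (rule refl)
  show ?thesis
  proof (cases "even n")
    case True
    then have "even (nat \<bar>n\<bar>)" by (simp add: even_nat_iff)
    then have c: "(1 + (-1::int) ^ nat \<bar>n\<bar>) div 2 = 1" by simp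
    show ?thesis unfolding c R mainG using True by (simp add: sgn_powi)
  next
    case False
    then have "odd (nat \<bar>n\<bar>)" by (simp add: even_nat_iff)
    then have c: "(1 + (-1::int) ^ nat \<bar>n\<bar>) div 2 = 1 - 1" by simp
    show ?thesis unfolding c R gsum_shift mainG using False by (simp add: sgn_powi L_def)
  qed
qed

end
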